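(* Let $R$ be a commutative ring with identity and $M$ a non-zero comultiplication $R$-module with $G'(M)$ non-null and $|\mathrm{Min}(M)|<\infty$. Then the independence number of $G'(M)$ equals $|\mathrm{Min}(M)|$.
   Context: An $R$-module $M$ is a comultiplication module if for every submodule $N$ of $M$ there is an ideal $I$ of $R$ with $N=\mathrm{Ann}_M(I)$. A submodule $N$ of $M$ is large if $N\cap L\neq 0$ for every non-zero submodule $L$ of $M$. $\mathrm{Min}(M)$ is the set of minimal submodules of $M$. The large sum graph $G'(M)$ has as vertex set the set of all non-zero non-large submodules of $M$, and two distinct vertices $N,K$ are adjacent iff $N+K$ is non-large in $M$. The independence number $\alpha(G)$ is the maximum size of a set of pairwise non-adjacent vertices of $G$. *)

theory Defs
  imports "HOL-Algebra.Module" "HOL-Algebra.Ideal" "HOL-Library.Extended_Nat"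
begin

definition ann_mod :: "('a, 'c) ring_scheme \<Rightarrow> ('a, 'b, 'd) module_scheme \<Rightarrow> 'a set \<Rightarrow> 'b set" where
  "ann_mod R M I = {x \<in> carrier M. \<forall>a\<in>I. a \<odot>\<^bsub>M\<^esub> x = \<zero>\<^bsub>M\<^esub>}"

definition comultiplication_module :: "('a, 'c) ring_scheme \<Rightarrow> ('a, 'b, 'd) module_scheme \<Rightarrow> bool" where
  "comultiplication_module R M \<longleftrightarrow>
     (\<forall>N. submodule N R M \<longrightarrow> (\<exists>I. ideal I R \<and> N = ann_mod R M I))"

definition large_submodule :: "('a, 'c) ring_scheme \<Rightarrow> ('a, 'b, 'd) module_scheme \<Rightarrow> 'b set \<Rightarrow> bool" where
  "large_submodule R M N \<longleftrightarrow> submodule N R M \<and>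
     (\<forall>L. submodule L R M \<and> L \<noteq> {\<zero>\<^bsub>M\<^esub>} \<longrightarrow> N \<inter> L \<noteq> {\<zero>\<^bsub>M\<^esub>})"

definition minimal_submodule :: "('a, 'c) ring_scheme \<Rightarrow> ('a, 'b, 'd) module_scheme \<Rightarrow> 'b set \<Rightarrow> bool" where
  "minimal_submodule R M N \<longleftrightarrow> submodule N R M \<and> N \<noteq> {\<zero>\<^bsub>M\<^esub>} \<and>
     (\<forall>L. submodule L R M \<and> L \<subseteq> N \<and> L \<noteq> {\<zero>\<^bsub>M\<^esub>} \<longrightarrow> L = N)"

definition Min_sub :: "('a, 'c) ring_scheme \<Rightarrow> ('a, 'b, 'd) module_scheme \<Rightarrow> 'b set set" where
  "Min_sub R M = {N. minimal_submodule R M N}"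

definition sum_sub :: "('a, 'b, 'd) module_scheme \<Rightarrow> 'b set \<Rightarrow> 'b set \<Rightarrow> 'b set" where
  "sum_sub M N K = {n \<oplus>\<^bsub>M\<^esub> k | n k. n \<in> N \<and> k \<in> K}"

definition lsg_vertices :: "('a, 'c) ring_scheme \<Rightarrow> ('a, 'b, 'd) module_scheme \<Rightarrow> 'b set set" where
  "lsg_vertices R M = {N. submodule N R M \<and> N \<noteq> {\<zero>\<^bsub>M\<^esub>} \<and> \<not> large_submodule R M N}"

definition lsg_adj :: "('a, 'c) ring_scheme \<Rightarrow> ('a, 'b, 'd) module_scheme \<Rightarrow> 'b set \<Rightarrow> 'b set \<Rightarrow> bool" where
  "lsg_adj R M N K \<longleftrightarrow> N \<in> lsg_vertices R M \<and> K \<in> lsg_vertices R M \<and> N \<noteq> K \<and>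
     \<not> large_submodule R M (sum_sub M N K)"

definition lsg_independent :: "('a, 'c) ring_scheme \<Rightarrow> ('a, 'b, 'd) module_scheme \<Rightarrow> 'b set set \<Rightarrow> bool" where
  "lsg_independent R M S \<longleftrightarrow> S \<subseteq> lsg_vertices R M \<and> (\<forall>N\<in>S. \<forall>K\<in>S. \<not> lsg_adj R M N K)"

definition lsg_independence_number :: "('a, 'c) ring_scheme \<Rightarrow> ('a, 'b, 'd) module_scheme \<Rightarrow> enat" where
  "lsg_independence_number R M =
     Sup ((\<lambda>S. if finite S then enat (card S) else \<infinity>) ` {S. lsg_independent R M S})"

definition lsg_non_null :: "('a, 'c) ring_scheme \<Rightarrow> ('a, 'b, 'd) module_scheme \<Rightarrow> bool" where
  "lsg_non_null R M \<longleftrightarrow> (\<exists>N K. lsg_adj R M N K)"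

end

theory Submission imports Defs "HOL-Algebra.Ring_Divisibility" begin

lemma memgenE: "b \<in> {f a | a. P a} \<Longrightarrow> (\<And>a. P a \<Longrightarrow> b = f a \<Longrightarrow> Q) \<Longrightarrow> Q" by blast
lemma memgenI: "P a \<Longrightarrow> b = f a \<Longrightarrow> b \<in> {f a | a. P a}" by blast

lemma memgenE2: "b \<in> {f n k | n k. P n k} \<Longrightarrow> (\<And>n k. P n k \<Longrightarrow> b = f n k \<Longrightarrow> Q) \<Longrightarrow> Q" by blast
lemma memgenI2: "P n k \<Longrightarrow> b = f n k \<Longrightarrow> b \<in> {f n k | n k. P n k}" by blast

lemma memsumE: "b \<in> sum_sub M N K \<Longrightarrow> (\<And>n k. n \<in> N \<Longrightarrow> k \<in> K \<Longrightarrow> b = n \<oplus>\<^bsub>M\<^esub> k \<Longrightarrow> Q) \<Longrightarrow> Q"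
  unfolding sum_sub_def by blast

lemma memsumI: "n \<in> N \<Longrightarrow> k \<in> K \<Longrightarrow> b = n \<oplus>\<^bsub>M\<^esub> k \<Longrightarrow> b \<in> sum_sub M N K"
  unfolding sum_sub_def by blast

lemma ex_nz: "S \<noteq> {z} \<Longrightarrow> z \<in> S \<Longrightarrow> \<exists>s\<in>S. s \<noteq> z" by blast
lemma ne_single: "s \<in> A \<Longrightarrow> s \<noteq> z \<Longrightarrow> A \<noteq> {z}" by blast
lemma int_nz: "z \<in> S \<inter> N \<Longrightarrow> S \<inter> N \<noteq> {z} \<Longrightarrow> \<exists>u. u \<in> S \<and> u \<in> N \<and> u \<noteq> z" by blast

lemma memgenI3: "P a \<Longrightarrow> f a \<in> {f a | a. P a}" by blast

lemma ne_empty: "a \<in> A \<Longrightarrow> A \<noteq> {}" by blast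

context Module.module begin

lemma sub_gen:
  assumes "ideal I R" "x \<in> carrier M"
  shows "submodule {a \<odot>\<^bsub>M\<^esub> x | a. a \<in> I} R M"
proof -
  interpret I: ideal I R by fact
  show ?thesis
  proof (rule submoduleI)
    show "{a \<odot>\<^bsub>M\<^esub> x | a. a \<in> I} \<subseteq> carrier M" using assms(2) I.Icarr smult_closed by blast
    show "\<zero>\<^bsub>M\<^esub> \<in> {a \<odot>\<^bsub>M\<^esub> x | a. a \<in> I}"
    proof -
      have z: "\<zero> \<in> I" by (rule additive_subgroup.zero_closed[OF I.is_additive_subgroup])
      have "\<zero>\<^bsub>M\<^esub> = \<zero> \<odot>\<^bsub>M\<^esub> x" using assms(2) by simp
      then show ?thesis using z by (intro memgenI)
    qed
    show "\<ominus>\<^bsub>M\<^esub> b \<in> {a \<odot>\<^bsub>M\<^esub> x | a. a \<in> I}" if bI: "b \<in> {a \<odot>\<^bsub>M\<^esub> x | a. a \<in> I}" for b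
    proof -
      obtain a where a: "a \<in> I" "b = a \<odot>\<^bsub>M\<^esub> x" by (rule memgenE[OF bI])
      then have "\<ominus>\<^bsub>M\<^esub> b = (\<ominus> a) \<odot>\<^bsub>M\<^esub> x" using assms(2) I.Icarr by (simp add: smult_l_minus)
      then show ?thesis using a(1) I.a_inv_closed by (intro memgenI)
    qed
    show "b \<oplus>\<^bsub>M\<^esub> c \<in> {a \<odot>\<^bsub>M\<^esub> x | a. a \<in> I}" if bI: "b \<in> {a \<odot>\<^bsub>M\<^esub> x | a. a \<in> I}" and cI: "c \<in> {a \<odot>\<^bsub>M\<^esub> x | a. a \<in> I}" for b c
    proof -
      obtain a where a: "a \<in> I" "b = a \<odot>\<^bsub>M\<^esub> x" by (rule memgenE[OF bI])
      obtain a' where a': "a' \<in> I" "c = a' \<odot>\<^bsub>M\<^esub> x" by (rule memgenE[OF cI])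
      have "b \<oplus>\<^bsub>M\<^esub> c = (a \<oplus> a') \<odot>\<^bsub>M\<^esub> x" using a a' assms(2) I.Icarr by (simp add: smult_l_distr)
      then show ?thesis using a(1) a'(1) I.a_closed by (intro memgenI)
    qed
    show "r \<odot>\<^bsub>M\<^esub> b \<in> {a \<odot>\<^bsub>M\<^esub> x | a. a \<in> I}" if rR: "r \<in> carrier R" and bI: "b \<in> {a \<odot>\<^bsub>M\<^esub> x | a. a \<in> I}" for r b
    proof -
      obtain a where a: "a \<in> I" "b = a \<odot>\<^bsub>M\<^esub> x" by (rule memgenE[OF bI])
      have "r \<odot>\<^bsub>M\<^esub> b = (r \<otimes> a) \<odot>\<^bsub>M\<^esub> x" using a rR assms(2) I.Icarr by (simp add: smult_assoc1)
      then show ?thesis using a(1) rR I.I_l_closed by (intro memgenI)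
    qed
  qed
qed


lemma sub_ann:
  assumes rR: "r \<in> carrier R"
  shows "submodule {x \<in> carrier M. r \<odot>\<^bsub>M\<^esub> x = \<zero>\<^bsub>M\<^esub>} R M"
proof (rule submoduleI)
  show "{x \<in> carrier M. r \<odot>\<^bsub>M\<^esub> x = \<zero>\<^bsub>M\<^esub>} \<subseteq> carrier M" by (rule subsetI) simp
  show "\<zero>\<^bsub>M\<^esub> \<in> {x \<in> carrier M. r \<odot>\<^bsub>M\<^esub> x = \<zero>\<^bsub>M\<^esub>}" using rR by simp
  show "\<ominus>\<^bsub>M\<^esub> b \<in> {x \<in> carrier M. r \<odot>\<^bsub>M\<^esub> x = \<zero>\<^bsub>M\<^esub>}" if bI: "b \<in> {x \<in> carrier M. r \<odot>\<^bsub>M\<^esub> x = \<zero>\<^bsub>M\<^esub>}" for b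
    using bI rR by (simp add: smult_r_minus)
  show "b \<oplus>\<^bsub>M\<^esub> c \<in> {x \<in> carrier M. r \<odot>\<^bsub>M\<^esub> x = \<zero>\<^bsub>M\<^esub>}" if bI: "b \<in> {x \<in> carrier M. r \<odot>\<^bsub>M\<^esub> x = \<zero>\<^bsub>M\<^esub>}" and cI: "c \<in> {x \<in> carrier M. r \<odot>\<^bsub>M\<^esub> x = \<zero>\<^bsub>M\<^esub>}" for b c
    using bI cI rR by (simp add: smult_r_distr)
  show "s \<odot>\<^bsub>M\<^esub> b \<in> {x \<in> carrier M. r \<odot>\<^bsub>M\<^esub> x = \<zero>\<^bsub>M\<^esub>}" if sR: "s \<in> carrier R" and bI: "b \<in> {x \<in> carrier M. r \<odot>\<^bsub>M\<^esub> x = \<zero>\<^bsub>M\<^esub>}" for s b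
  proof -
    have b: "b \<in> carrier M" "r \<odot>\<^bsub>M\<^esub> b = \<zero>\<^bsub>M\<^esub>" using bI by simp_all
    have "r \<odot>\<^bsub>M\<^esub> (s \<odot>\<^bsub>M\<^esub> b) = (r \<otimes> s) \<odot>\<^bsub>M\<^esub> b" using sR rR b by (simp add: smult_assoc1)
    also have "\<dots> = (s \<otimes> r) \<odot>\<^bsub>M\<^esub> b" using sR rR by (simp add: m_comm)
    also have "\<dots> = s \<odot>\<^bsub>M\<^esub> (r \<odot>\<^bsub>M\<^esub> b)" using sR rR b by (simp add: smult_assoc1)
    also have "\<dots> = \<zero>\<^bsub>M\<^esub>" using sR b by simp
    finally show ?thesis using sR b by simp
  qed
qed

lemma sub_sum:
  assumes "submodule N R M" "submodule K R M"
  shows "submodule (sum_sub M N K) R M"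
proof -
  note N = submoduleE[OF assms(1)] and K = submoduleE[OF assms(2)]
  have N0: "\<zero>\<^bsub>M\<^esub> \<in> N" and K0: "\<zero>\<^bsub>M\<^esub> \<in> K"
    using subgroup.one_closed[OF submodule.axioms(1)[OF assms(1)]]
      subgroup.one_closed[OF submodule.axioms(1)[OF assms(2)]] by simp_all
  show ?thesis
  proof (rule submoduleI)
    show "sum_sub M N K \<subseteq> carrier M"
    proof (rule subsetI)
      fix b assume "b \<in> sum_sub M N K"
      then obtain n k where "n \<in> N" "k \<in> K" "b = n \<oplus>\<^bsub>M\<^esub> k" by (rule memsumE)
      then show "b \<in> carrier M" using N(1) K(1) by (simp add: subset_iff)
    qed
    show "\<zero>\<^bsub>M\<^esub> \<in> sum_sub M N K" by (rule memsumI[OF N0 K0]) simp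
    show "\<ominus>\<^bsub>M\<^esub> b \<in> sum_sub M N K" if bI: "b \<in> sum_sub M N K" for b
    proof -
      obtain n k where 1: "n \<in> N" "k \<in> K" "b = n \<oplus>\<^bsub>M\<^esub> k" by (rule memsumE[OF bI])
      have "\<ominus>\<^bsub>M\<^esub> b = \<ominus>\<^bsub>M\<^esub> n \<oplus>\<^bsub>M\<^esub> \<ominus>\<^bsub>M\<^esub> k"
        using 1 N(1) K(1) by (simp add: M.minus_add subset_iff)
      then show ?thesis using 1 N(3) K(3) by (intro memsumI)
    qed
    show "b \<oplus>\<^bsub>M\<^esub> c \<in> sum_sub M N K" if bI: "b \<in> sum_sub M N K" and cI: "c \<in> sum_sub M N K" for b c
    proof -
      obtain n k where 1: "n \<in> N" "k \<in> K" "b = n \<oplus>\<^bsub>M\<^esub> k" by (rule memsumE[OF bI])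
      obtain n' k' where 2: "n' \<in> N" "k' \<in> K" "c = n' \<oplus>\<^bsub>M\<^esub> k'" by (rule memsumE[OF cI])
      have c: "n \<in> carrier M" "n' \<in> carrier M" "k \<in> carrier M" "k' \<in> carrier M" using 1 2 N(1) K(1) by (simp_all add: subset_iff)
      have "b \<oplus>\<^bsub>M\<^esub> c = (n \<oplus>\<^bsub>M\<^esub> n') \<oplus>\<^bsub>M\<^esub> (k \<oplus>\<^bsub>M\<^esub> k')"
        unfolding 1 2 using c by (simp add: M.a_ac)
      then show ?thesis using 1 2 N(5) K(5) by (intro memsumI)
    qed
    show "r \<odot>\<^bsub>M\<^esub> b \<in> sum_sub M N K" if rR: "r \<in> carrier R" and bI: "b \<in> sum_sub M N K" for r b
    proof -
      obtain n k where 1: "n \<in> N" "k \<in> K" "b = n \<oplus>\<^bsub>M\<^esub> k" by (rule memsumE[OF bI])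
      have "r \<odot>\<^bsub>M\<^esub> b = r \<odot>\<^bsub>M\<^esub> n \<oplus>\<^bsub>M\<^esub> r \<odot>\<^bsub>M\<^esub> k"
        using 1 N(1) K(1) rR by (simp add: subset_iff smult_r_distr)
      then show ?thesis using 1 N(4) K(4) rR by (intro memsumI)
    qed
  qed
qed

lemma sub_zero: "submodule N R M \<Longrightarrow> \<zero>\<^bsub>M\<^esub> \<in> N"
  using subgroup.one_closed[OF submodule.axioms(1)] by simp

lemma smult_comm:
  assumes "a \<in> carrier R" "b \<in> carrier R" "v \<in> carrier M"
  shows "a \<odot>\<^bsub>M\<^esub> (b \<odot>\<^bsub>M\<^esub> v) = b \<odot>\<^bsub>M\<^esub> (a \<odot>\<^bsub>M\<^esub> v)"
proof -
  have "a \<odot>\<^bsub>M\<^esub> (b \<odot>\<^bsub>M\<^esub> v) = (a \<otimes> b) \<odot>\<^bsub>M\<^esub> v" using assms by (simp add: smult_assoc1)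
  also have "\<dots> = (b \<otimes> a) \<odot>\<^bsub>M\<^esub> v" using assms by (simp add: m_comm)
  also have "\<dots> = b \<odot>\<^bsub>M\<^esub> (a \<odot>\<^bsub>M\<^esub> v)" using assms by (simp add: smult_assoc1)
  finally show ?thesis .
qed

lemma min_sub: "minimal_submodule R M S \<Longrightarrow> submodule S R M"
  unfolding minimal_submodule_def by simp

lemma min_eq:
  assumes "minimal_submodule R M S" "submodule L R M" "L \<subseteq> S" "L \<noteq> {\<zero>\<^bsub>M\<^esub>}"
  shows "L \<noteq> {\<zero>\<^bsub>M\<^esub>} \<Longrightarrow> S = L"
proof -
  have "\<forall>L. submodule L R M \<and> L \<subseteq> S \<and> L \<noteq> {\<zero>\<^bsub>M\<^esub>} \<longrightarrow> L = S"
    using assms(1) unfolding minimal_submodule_def by (elim conjE)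
  then have "submodule L R M \<and> L \<subseteq> S \<and> L \<noteq> {\<zero>\<^bsub>M\<^esub>} \<longrightarrow> L = S" by (rule spec)
  then show ?thesis using assms(2-4) by simp
qed

lemma min_carr: "minimal_submodule R M S \<Longrightarrow> S \<subseteq> carrier M"
  using submoduleE(1)[OF min_sub] by simp

lemma min_nz: assumes "minimal_submodule R M S" obtains s where "s \<in> S" "s \<noteq> \<zero>\<^bsub>M\<^esub>"
proof -
  have "S \<noteq> {\<zero>\<^bsub>M\<^esub>}" "\<zero>\<^bsub>M\<^esub> \<in> S" using assms sub_zero[OF min_sub[OF assms]] unfolding minimal_submodule_def by simp_all
  from ex_nz[OF this] obtain s where "s \<in> S" "s \<noteq> \<zero>\<^bsub>M\<^esub>" ..
  then show ?thesis by (rule that)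
qed

lemma min_gen:
  assumes S: "minimal_submodule R M S" and s: "s \<in> S" "s \<noteq> \<zero>\<^bsub>M\<^esub>"
  shows "S = {a \<odot>\<^bsub>M\<^esub> s | a. a \<in> carrier R}"
proof -
  have sM: "s \<in> carrier M" using s(1) min_carr[OF S] by (simp add: subset_iff)
  have sub: "submodule {a \<odot>\<^bsub>M\<^esub> s | a. a \<in> carrier R} R M"
    by (rule sub_gen[OF oneideal sM])
  have sub2: "{a \<odot>\<^bsub>M\<^esub> s | a. a \<in> carrier R} \<subseteq> S"
  proof (rule subsetI)
    fix w assume "w \<in> {a \<odot>\<^bsub>M\<^esub> s | a. a \<in> carrier R}"
    then obtain a where "a \<in> carrier R" "w = a \<odot>\<^bsub>M\<^esub> s" by (rule memgenE)
    then show "w \<in> S" using submoduleE(4)[OF min_sub[OF S]] s(1) by simp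
  qed
  have "\<one> \<odot>\<^bsub>M\<^esub> s \<in> {a \<odot>\<^bsub>M\<^esub> s | a. a \<in> carrier R}" by (rule memgenI3) simp
  then have "s \<in> {a \<odot>\<^bsub>M\<^esub> s | a. a \<in> carrier R}" using sM by simp
  then have "{a \<odot>\<^bsub>M\<^esub> s | a. a \<in> carrier R} \<noteq> {\<zero>\<^bsub>M\<^esub>}" using s(2) by (rule ne_single)
  then show ?thesis using min_eq[OF S sub sub2] by simp
qed

lemma min_ann:
  assumes S: "minimal_submodule R M S" and a: "a \<in> carrier R"
    and u: "u \<in> S" "u \<noteq> \<zero>\<^bsub>M\<^esub>" "a \<odot>\<^bsub>M\<^esub> u = \<zero>\<^bsub>M\<^esub>" and v: "v \<in> S"
  shows "a \<odot>\<^bsub>M\<^esub> v = \<zero>\<^bsub>M\<^esub>"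
proof -
  have "v \<in> {b \<odot>\<^bsub>M\<^esub> u | b. b \<in> carrier R}" using min_gen[OF S u(1,2)] v by simp
  then obtain b where b: "b \<in> carrier R" "v = b \<odot>\<^bsub>M\<^esub> u" by (rule memgenE)
  have uM: "u \<in> carrier M" using u(1) min_carr[OF S] by (simp add: subset_iff)
  have "a \<odot>\<^bsub>M\<^esub> v = b \<odot>\<^bsub>M\<^esub> (a \<odot>\<^bsub>M\<^esub> u)" using b a uM by (simp add: smult_comm)
  then show ?thesis using u(3) b(1) by simp
qed

lemma min_in:
  assumes S: "minimal_submodule R M S" and N: "submodule N R M"
    and u: "u \<in> S" "u \<in> N" "u \<noteq> \<zero>\<^bsub>M\<^esub>"
  shows "S \<subseteq> N"
proof (rule subsetI)
  fix v assume "v \<in> S"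
  then have "v \<in> {b \<odot>\<^bsub>M\<^esub> u | b. b \<in> carrier R}" using min_gen[OF S u(1,3)] by simp
  then obtain b where b: "b \<in> carrier R" "v = b \<odot>\<^bsub>M\<^esub> u" by (rule memgenE)
  then show "v \<in> N" using submoduleE(4)[OF N] u(2) by simp
qed

lemma min_int:
  assumes S: "minimal_submodule R M S" and N: "submodule N R M" and ne: "S \<inter> N \<noteq> {\<zero>\<^bsub>M\<^esub>}"
  shows "S \<subseteq> N"
proof -
  have "\<zero>\<^bsub>M\<^esub> \<in> S \<inter> N" using sub_zero[OF min_sub[OF S]] sub_zero[OF N] by simp
  from int_nz[OF this ne] obtain u where "u \<in> S" "u \<in> N" "u \<noteq> \<zero>\<^bsub>M\<^esub>" by (elim exE conjE)
  then show ?thesis using min_in[OF S N] by simp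
qed

lemma comult_ann:
  assumes "comultiplication_module R M" "submodule N R M"
  obtains I where "ideal I R" "N = ann_mod R M I"
proof -
  have "submodule N R M \<longrightarrow> (\<exists>I. ideal I R \<and> N = ann_mod R M I)"
    using assms(1) unfolding comultiplication_module_def by (rule spec)
  then have "\<exists>I. ideal I R \<and> N = ann_mod R M I" using assms(2) by simp
  then show ?thesis by (elim exE conjE) (rule that)
qed

lemma ann_memD: "x \<in> ann_mod R M I \<Longrightarrow> a \<in> I \<Longrightarrow> a \<odot>\<^bsub>M\<^esub> x = \<zero>\<^bsub>M\<^esub>"
  unfolding ann_mod_def by simp

lemma ann_memI: "x \<in> carrier M \<Longrightarrow> (\<And>a. a \<in> I \<Longrightarrow> a \<odot>\<^bsub>M\<^esub> x = \<zero>\<^bsub>M\<^esub>) \<Longrightarrow> x \<in> ann_mod R M I"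
  unfolding ann_mod_def by simp

lemma ann_nmem: "x \<in> carrier M \<Longrightarrow> x \<notin> ann_mod R M I \<Longrightarrow> \<exists>a\<in>I. a \<odot>\<^bsub>M\<^esub> x \<noteq> \<zero>\<^bsub>M\<^esub>"
  unfolding ann_mod_def by simp

lemma min_prime:
  assumes C: "comultiplication_module R M" and S: "minimal_submodule R M S"
    and N: "submodule N R M" and K: "submodule K R M" and sub: "S \<subseteq> sum_sub M N K"
  shows "S \<subseteq> N \<or> S \<subseteq> K"
proof (rule ccontr)
  assume "\<not> (S \<subseteq> N \<or> S \<subseteq> K)"
  then obtain t t' where t: "t \<in> S" "t \<notin> N" and t': "t' \<in> S" "t' \<notin> K" by (auto simp: subset_iff)
  obtain I where I: "ideal I R" "N = ann_mod R M I" by (rule comult_ann[OF C N])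
  obtain J where J: "ideal J R" "K = ann_mod R M J" by (rule comult_ann[OF C K])
  have tM: "t \<in> carrier M" "t' \<in> carrier M" using t(1) t'(1) min_carr[OF S] by (simp_all add: subset_iff)
  have "t \<notin> ann_mod R M I" using t(2) I(2) by simp
  from ann_nmem[OF tM(1) this] obtain i where i: "i \<in> I" "i \<odot>\<^bsub>M\<^esub> t \<noteq> \<zero>\<^bsub>M\<^esub>" ..
  have "t' \<notin> ann_mod R M J" using t'(2) J(2) by simp
  from ann_nmem[OF tM(2) this] obtain j where j: "j \<in> J" "j \<odot>\<^bsub>M\<^esub> t' \<noteq> \<zero>\<^bsub>M\<^esub>" ..
  have iR: "i \<in> carrier R" using i(1) ideal.Icarr[OF I(1)] by simp
  have jR: "j \<in> carrier R" using j(1) ideal.Icarr[OF J(1)] by simp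
  have t0: "t \<noteq> \<zero>\<^bsub>M\<^esub>" using i(2) iR by (metis smult_r_null)
  have jt: "j \<odot>\<^bsub>M\<^esub> t \<noteq> \<zero>\<^bsub>M\<^esub>" using min_ann[OF S jR t(1) t0 _ t'(1)] j(2) by metis
  have jtS: "j \<odot>\<^bsub>M\<^esub> t \<in> S" using submoduleE(4)[OF min_sub[OF S] jR t(1)] .
  have ijt: "i \<odot>\<^bsub>M\<^esub> (j \<odot>\<^bsub>M\<^esub> t) \<noteq> \<zero>\<^bsub>M\<^esub>" using min_ann[OF S iR jtS jt _ t(1)] i(2) by metis
  have "t \<in> sum_sub M N K" using sub t(1) by (simp add: subset_iff)
  then obtain n k where nk: "n \<in> N" "k \<in> K" "t = n \<oplus>\<^bsub>M\<^esub> k" by (rule memsumE)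
  have nM: "n \<in> carrier M" and kM: "k \<in> carrier M" using nk submoduleE(1)[OF N] submoduleE(1)[OF K] by (simp_all add: subset_iff)
  have "i \<odot>\<^bsub>M\<^esub> (j \<odot>\<^bsub>M\<^esub> t) = i \<odot>\<^bsub>M\<^esub> (j \<odot>\<^bsub>M\<^esub> n) \<oplus>\<^bsub>M\<^esub> i \<odot>\<^bsub>M\<^esub> (j \<odot>\<^bsub>M\<^esub> k)"
    using nk(3) nM kM iR jR by (simp add: smult_r_distr)
  also have "i \<odot>\<^bsub>M\<^esub> (j \<odot>\<^bsub>M\<^esub> n) = j \<odot>\<^bsub>M\<^esub> (i \<odot>\<^bsub>M\<^esub> n)" using iR jR nM by (rule smult_comm)
  also have "i \<odot>\<^bsub>M\<^esub> n = \<zero>\<^bsub>M\<^esub>" using ann_memD[of n I i] nk(1) I(2) i(1) by simp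
  also have "j \<odot>\<^bsub>M\<^esub> k = \<zero>\<^bsub>M\<^esub>" using ann_memD[of k J j] nk(2) J(2) j(1) by simp
  finally have "i \<odot>\<^bsub>M\<^esub> (j \<odot>\<^bsub>M\<^esub> t) = \<zero>\<^bsub>M\<^esub>" using iR jR by simp
  then show False using ijt by simp
qed

lemma min_sep:
  assumes C: "comultiplication_module R M" and S: "minimal_submodule R M S"
    and S': "minimal_submodule R M S'" and ne: "S \<noteq> S'"
  shows "\<exists>r\<in>carrier R. (\<forall>x\<in>S'. r \<odot>\<^bsub>M\<^esub> x = \<zero>\<^bsub>M\<^esub>) \<and> (\<exists>s\<in>S. r \<odot>\<^bsub>M\<^esub> s \<noteq> \<zero>\<^bsub>M\<^esub>)"
proof (rule ccontr)
  assume H: "\<not> ?thesis"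
  obtain I where I: "ideal I R" "S' = ann_mod R M I" by (rule comult_ann[OF C min_sub[OF S']])
  have "S \<subseteq> S'"
  proof (rule subsetI)
    fix s assume s: "s \<in> S"
    have sM: "s \<in> carrier M" using s min_carr[OF S] by (simp add: subset_iff)
    show "s \<in> S'" unfolding I(2)
    proof (rule ann_memI[OF sM])
      fix a assume a: "a \<in> I"
      have aR: "a \<in> carrier R" using a ideal.Icarr[OF I(1)] by simp
      have "\<forall>x\<in>S'. a \<odot>\<^bsub>M\<^esub> x = \<zero>\<^bsub>M\<^esub>" using I(2) a ann_memD by metis
      then show "a \<odot>\<^bsub>M\<^esub> s = \<zero>\<^bsub>M\<^esub>" using H aR s by metis
    qed
  qed
  obtain s where s: "s \<in> S" "s \<noteq> \<zero>\<^bsub>M\<^esub>" by (rule min_nz[OF S])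
  have "S \<noteq> {\<zero>\<^bsub>M\<^esub>}" using s by (rule ne_single)
  then have "S' = S" using min_eq[OF S' min_sub[OF S] \<open>S \<subseteq> S'\<close>] by simp
  then show False using ne by simp
qed

lemma min_prod:
  assumes C: "comultiplication_module R M" and S: "minimal_submodule R M S"
    and s0: "s0 \<in> S" "s0 \<noteq> \<zero>\<^bsub>M\<^esub>"
  shows "finite F \<Longrightarrow> (\<forall>S'\<in>F. minimal_submodule R M S') \<Longrightarrow> S \<notin> F \<Longrightarrow>
    \<exists>r\<in>carrier R. (\<forall>S'\<in>F. \<forall>x\<in>S'. r \<odot>\<^bsub>M\<^esub> x = \<zero>\<^bsub>M\<^esub>) \<and> r \<odot>\<^bsub>M\<^esub> s0 \<noteq> \<zero>\<^bsub>M\<^esub>"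
proof (induction F rule: finite_induct)
  case empty
  have "s0 \<in> carrier M" using s0(1) min_carr[OF S] by (simp add: subset_iff)
  then have "\<one> \<odot>\<^bsub>M\<^esub> s0 \<noteq> \<zero>\<^bsub>M\<^esub>" using s0(2) by simp
  then show ?case by (intro bexI[of _ \<one>]) simp_all
next
  case (insert S'' F)
  have S'': "minimal_submodule R M S''" and ne: "S \<noteq> S''" using insert.prems by simp_all
  have Fm: "\<forall>S'\<in>F. minimal_submodule R M S'" "S \<notin> F" using insert.prems by simp_all
  obtain r where r: "r \<in> carrier R" "\<forall>S'\<in>F. \<forall>x\<in>S'. r \<odot>\<^bsub>M\<^esub> x = \<zero>\<^bsub>M\<^esub>" "r \<odot>\<^bsub>M\<^esub> s0 \<noteq> \<zero>\<^bsub>M\<^esub>"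
    using insert.IH[OF Fm] by (elim bexE conjE)
  from min_sep[OF C S S'' ne] obtain r'' where r''R: "r'' \<in> carrier R"
    and r''P: "(\<forall>x\<in>S''. r'' \<odot>\<^bsub>M\<^esub> x = \<zero>\<^bsub>M\<^esub>) \<and> (\<exists>s\<in>S. r'' \<odot>\<^bsub>M\<^esub> s \<noteq> \<zero>\<^bsub>M\<^esub>)" ..
  have r'': "r'' \<in> carrier R" "\<forall>x\<in>S''. r'' \<odot>\<^bsub>M\<^esub> x = \<zero>\<^bsub>M\<^esub>" "\<exists>s\<in>S. r'' \<odot>\<^bsub>M\<^esub> s \<noteq> \<zero>\<^bsub>M\<^esub>"
    using r''R r''P by simp_all
  obtain s where s: "s \<in> S" "r'' \<odot>\<^bsub>M\<^esub> s \<noteq> \<zero>\<^bsub>M\<^esub>" using r''(3) by (elim bexE)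
  have s0M: "s0 \<in> carrier M" using s0(1) min_carr[OF S] by (simp add: subset_iff)
  have r''s0: "r'' \<odot>\<^bsub>M\<^esub> s0 \<noteq> \<zero>\<^bsub>M\<^esub>"
  proof
    assume "r'' \<odot>\<^bsub>M\<^esub> s0 = \<zero>\<^bsub>M\<^esub>"
    then have "r'' \<odot>\<^bsub>M\<^esub> s = \<zero>\<^bsub>M\<^esub>" using min_ann[OF S r''(1) s0(1) s0(2) _ s(1)] by simp
    then show False using s(2) by simp
  qed
  have rs: "r'' \<odot>\<^bsub>M\<^esub> s0 \<in> S" using submoduleE(4)[OF min_sub[OF S] r''(1) s0(1)] .
  have fin: "(r \<otimes> r'') \<odot>\<^bsub>M\<^esub> s0 \<noteq> \<zero>\<^bsub>M\<^esub>"
  proof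
    assume "(r \<otimes> r'') \<odot>\<^bsub>M\<^esub> s0 = \<zero>\<^bsub>M\<^esub>"
    then have "r \<odot>\<^bsub>M\<^esub> (r'' \<odot>\<^bsub>M\<^esub> s0) = \<zero>\<^bsub>M\<^esub>" using r(1) r''(1) s0M by (simp add: smult_assoc1)
    then have "r \<odot>\<^bsub>M\<^esub> s0 = \<zero>\<^bsub>M\<^esub>" using min_ann[OF S r(1) rs r''s0 _ s0(1)] by simp
    then show False using r(3) by simp
  qed
  have kill: "\<forall>S'\<in>insert S'' F. \<forall>x\<in>S'. (r \<otimes> r'') \<odot>\<^bsub>M\<^esub> x = \<zero>\<^bsub>M\<^esub>"
  proof (intro ballI)
    fix S' x assume S'in: "S' \<in> insert S'' F" and x: "x \<in> S'"
    have S'm: "minimal_submodule R M S'" using S'in S'' Fm(1) by (cases "S' = S''") simp_all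
    have xM: "x \<in> carrier M" using x min_carr[OF S'm] by (simp add: subset_iff)
    show "(r \<otimes> r'') \<odot>\<^bsub>M\<^esub> x = \<zero>\<^bsub>M\<^esub>"
    proof (cases "S' = S''")
      case True
      then have "r'' \<odot>\<^bsub>M\<^esub> x = \<zero>\<^bsub>M\<^esub>" using r''(2) x by simp
      then show ?thesis using r(1) r''(1) xM by (simp add: smult_assoc1)
    next
      case False
      then have "S' \<in> F" using S'in by simp
      then have "r \<odot>\<^bsub>M\<^esub> x = \<zero>\<^bsub>M\<^esub>" using r(2) x by simp
      then show ?thesis using r(1) r''(1) xM by (simp add: smult_assoc1 smult_comm)
    qed
  qed
  have "r \<otimes> r'' \<in> carrier R" using r(1) r''(1) by simp
  then show ?case using kill fin by (intro bexI[of _ "r \<otimes> r''"]) simp_all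
qed

lemma exists_max:
  assumes xM: "x \<in> carrier M" and x0: "x \<noteq> \<zero>\<^bsub>M\<^esub>"
  obtains m where "ideal m R" "\<forall>a\<in>m. a \<odot>\<^bsub>M\<^esub> x \<noteq> x"
    "\<forall>b\<in>carrier R. b \<notin> m \<longrightarrow> (\<exists>u\<in>m. \<exists>c\<in>carrier R. x = u \<odot>\<^bsub>M\<^esub> x \<oplus>\<^bsub>M\<^esub> (c \<otimes> b) \<odot>\<^bsub>M\<^esub> x)"
proof -
  define \<A> where "\<A> = {J. ideal J R \<and> (\<forall>a\<in>J. a \<odot>\<^bsub>M\<^esub> x \<noteq> x)}"
  have z: "{\<zero>} \<in> \<A>" unfolding \<A>_def using zeroideal xM x0 by simp
  have "\<exists>m\<in>\<A>. \<forall>X\<in>\<A>. m \<subseteq> X \<longrightarrow> X = m"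
  proof (rule subset_Zorn_nonempty)
    show "\<A> \<noteq> {}" using z by (rule ne_empty)
  next
    fix \<C> assume ne: "\<C> \<noteq> {}" and ch: "subset.chain \<A> \<C>"
    have ch2: "subset.chain {I. ideal I R} \<C>" using ch unfolding pred_on.chain_def \<A>_def by (auto simp: subset_iff)
    have id: "ideal (\<Union>\<C>) R" using chain_Union_is_ideal[OF ch2] ne by simp
    have "\<forall>a\<in>\<Union>\<C>. a \<odot>\<^bsub>M\<^esub> x \<noteq> x"
    proof
      fix a assume "a \<in> \<Union>\<C>"
      then obtain J where J: "J \<in> \<C>" "a \<in> J" by (rule UnionE)
      have "J \<in> \<A>" using ch J(1) unfolding pred_on.chain_def by (auto simp: subset_iff)
      then show "a \<odot>\<^bsub>M\<^esub> x \<noteq> x" using J(2) unfolding \<A>_def by simp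
    qed
    then show "\<Union>\<C> \<in> \<A>" using id unfolding \<A>_def by simp
  qed
  then obtain m where m: "m \<in> \<A>" "\<And>X. X \<in> \<A> \<Longrightarrow> m \<subseteq> X \<Longrightarrow> X = m" by (elim bexE) simp
  have mI: "ideal m R" and mx: "\<forall>a\<in>m. a \<odot>\<^bsub>M\<^esub> x \<noteq> x" using m(1) unfolding \<A>_def by simp_all
  have mb: "\<forall>b\<in>carrier R. b \<notin> m \<longrightarrow> (\<exists>u\<in>m. \<exists>c\<in>carrier R. x = u \<odot>\<^bsub>M\<^esub> x \<oplus>\<^bsub>M\<^esub> (c \<otimes> b) \<odot>\<^bsub>M\<^esub> x)"
  proof (intro ballI impI)
    fix b assume bR: "b \<in> carrier R" and bm: "b \<notin> m"
    define J where "J = m <+>\<^bsub>R\<^esub> PIdl\<^bsub>R\<^esub> b"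
    have JI: "ideal J R" unfolding J_def by (rule add_ideals[OF mI cgenideal_ideal[OF bR]])
    have mJ: "m \<subseteq> J"
    proof
      fix u assume u: "u \<in> m"
      have uR: "u \<in> carrier R" using u ideal.Icarr[OF mI] by simp
      have "u = u \<oplus> \<zero> \<otimes> b" using uR bR by simp
      moreover have "\<zero> \<otimes> b \<in> PIdl\<^bsub>R\<^esub> b" unfolding cgenideal_def by (rule memgenI3) simp
      ultimately show "u \<in> J" unfolding J_def set_add_def' using u by (auto)
    qed
    have bJ: "b \<in> J"
    proof -
      have "b = \<zero> \<oplus> \<one> \<otimes> b" using bR by simp
      moreover have "\<one> \<otimes> b \<in> PIdl\<^bsub>R\<^esub> b" unfolding cgenideal_def by (rule memgenI3) simp
      moreover have "\<zero> \<in> m" by (rule additive_subgroup.zero_closed[OF ideal.axioms(1)[OF mI]])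
      ultimately show ?thesis unfolding J_def set_add_def' by auto
    qed
    have "J \<notin> \<A>"
    proof
      assume "J \<in> \<A>"
      then have "J = m" using m(2) mJ by simp
      then show False using bJ bm by simp
    qed
    then obtain a where a: "a \<in> J" "a \<odot>\<^bsub>M\<^esub> x = x" using JI unfolding \<A>_def by auto
    obtain u k where uk: "u \<in> m" "k \<in> PIdl\<^bsub>R\<^esub> b" "a = u \<oplus> k" using a(1) unfolding J_def set_add_def' by auto
    obtain c where c: "c \<in> carrier R" "k = c \<otimes> b" using uk(2) unfolding cgenideal_def by (rule memgenE)
    have uR: "u \<in> carrier R" using uk(1) ideal.Icarr[OF mI] by simp
    have "x = (u \<oplus> c \<otimes> b) \<odot>\<^bsub>M\<^esub> x" using a(2) uk(3) c(2) by simp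
    also have "\<dots> = u \<odot>\<^bsub>M\<^esub> x \<oplus>\<^bsub>M\<^esub> (c \<otimes> b) \<odot>\<^bsub>M\<^esub> x" using uR c(1) bR xM by (simp add: smult_l_distr)
    finally show "\<exists>u\<in>m. \<exists>c\<in>carrier R. x = u \<odot>\<^bsub>M\<^esub> x \<oplus>\<^bsub>M\<^esub> (c \<otimes> b) \<odot>\<^bsub>M\<^esub> x" using uk(1) c(1) by (intro bexI)
  qed
  show ?thesis by (rule that[OF mI mx mb])
qed

lemma min_ess:
  assumes C: "comultiplication_module R M" and L: "submodule L R M" and L0: "L \<noteq> {\<zero>\<^bsub>M\<^esub>}"
  shows "\<exists>S. minimal_submodule R M S \<and> S \<subseteq> L"
proof -
  from ex_nz[OF L0 sub_zero[OF L]] obtain x where x: "x \<in> L" "x \<noteq> \<zero>\<^bsub>M\<^esub>" ..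
  have xM: "x \<in> carrier M" using x(1) submoduleE(1)[OF L] by (simp add: subset_iff)
  obtain m where mI: "ideal m R" and mx: "\<forall>a\<in>m. a \<odot>\<^bsub>M\<^esub> x \<noteq> x"
    and mb: "\<forall>b\<in>carrier R. b \<notin> m \<longrightarrow> (\<exists>u\<in>m. \<exists>c\<in>carrier R. x = u \<odot>\<^bsub>M\<^esub> x \<oplus>\<^bsub>M\<^esub> (c \<otimes> b) \<odot>\<^bsub>M\<^esub> x)"
    by (rule exists_max[OF xM x(2)])
  have subm: "submodule {a \<odot>\<^bsub>M\<^esub> x | a. a \<in> m} R M" by (rule sub_gen[OF mI xM])
  obtain I where I: "ideal I R" "{a \<odot>\<^bsub>M\<^esub> x | a. a \<in> m} = ann_mod R M I" by (rule comult_ann[OF C subm])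
  have "x \<notin> ann_mod R M I"
  proof
    assume "x \<in> ann_mod R M I"
    then have "x \<in> {a \<odot>\<^bsub>M\<^esub> x | a. a \<in> m}" using I(2) by simp
    then obtain a where a: "a \<in> m" "x = a \<odot>\<^bsub>M\<^esub> x" by (rule memgenE)
    have "a \<odot>\<^bsub>M\<^esub> x \<noteq> x" using mx a(1) by simp
    then show False using a(2) by simp
  qed
  from ann_nmem[OF xM this] obtain r where r: "r \<in> I" "r \<odot>\<^bsub>M\<^esub> x \<noteq> \<zero>\<^bsub>M\<^esub>" ..
  have rR: "r \<in> carrier R" using r(1) ideal.Icarr[OF I(1)] by simp
  define y where "y = r \<odot>\<^bsub>M\<^esub> x"
  have yM: "y \<in> carrier M" unfolding y_def using rR xM by simp
  have y0: "y \<noteq> \<zero>\<^bsub>M\<^esub>" unfolding y_def by (rule r(2))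
  have yL: "y \<in> L" unfolding y_def by (rule submoduleE(4)[OF L rR x(1)])
  have my: "a \<odot>\<^bsub>M\<^esub> y = \<zero>\<^bsub>M\<^esub>" if a: "a \<in> m" for a
  proof -
    have aR: "a \<in> carrier R" using a ideal.Icarr[OF mI] by simp
    have "a \<odot>\<^bsub>M\<^esub> x \<in> {a \<odot>\<^bsub>M\<^esub> x | a. a \<in> m}" using a by (rule memgenI3)
    then have "a \<odot>\<^bsub>M\<^esub> x \<in> ann_mod R M I" using I(2) by simp
    then have "r \<odot>\<^bsub>M\<^esub> (a \<odot>\<^bsub>M\<^esub> x) = \<zero>\<^bsub>M\<^esub>" using r(1) by (rule ann_memD)
    then show ?thesis unfolding y_def using aR rR xM by (simp add: smult_comm)
  qed
  define S where "S = {c \<odot>\<^bsub>M\<^esub> y | c. c \<in> carrier R}"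
  have subS: "submodule S R M" unfolding S_def by (rule sub_gen[OF oneideal yM])
  have SL: "S \<subseteq> L"
  proof
    fix w assume "w \<in> S"
    then obtain c where "c \<in> carrier R" "w = c \<odot>\<^bsub>M\<^esub> y" unfolding S_def by (rule memgenE)
    then show "w \<in> L" using submoduleE(4)[OF L] yL by simp
  qed
  have "\<one> \<odot>\<^bsub>M\<^esub> y \<in> S" unfolding S_def by (rule memgenI3) simp
  then have yS: "y \<in> S" using yM by simp
  have S0: "S \<noteq> {\<zero>\<^bsub>M\<^esub>}" using yS y0 by (rule ne_single)
  have "minimal_submodule R M S"
    unfolding minimal_submodule_def
  proof (intro conjI allI impI subS S0)
    fix L' assume H: "submodule L' R M \<and> L' \<subseteq> S \<and> L' \<noteq> {\<zero>\<^bsub>M\<^esub>}"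
    then have L': "submodule L' R M" "L' \<subseteq> S" "L' \<noteq> {\<zero>\<^bsub>M\<^esub>}" by simp_all
    from ex_nz[OF L'(3) sub_zero[OF L'(1)]] obtain z where z: "z \<in> L'" "z \<noteq> \<zero>\<^bsub>M\<^esub>" ..
    have "z \<in> S" using z(1) L'(2) by (simp add: subset_iff)
    then obtain b where b: "b \<in> carrier R" "z = b \<odot>\<^bsub>M\<^esub> y" unfolding S_def by (rule memgenE)
    have bm: "b \<notin> m" using my z(2) b(2) by metis
    from mb b(1) bm obtain u where u: "u \<in> m" and "\<exists>c\<in>carrier R. x = u \<odot>\<^bsub>M\<^esub> x \<oplus>\<^bsub>M\<^esub> (c \<otimes> b) \<odot>\<^bsub>M\<^esub> x" by metis
    then obtain c where c: "c \<in> carrier R" "x = u \<odot>\<^bsub>M\<^esub> x \<oplus>\<^bsub>M\<^esub> (c \<otimes> b) \<odot>\<^bsub>M\<^esub> x" by (elim bexE)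
    have uR: "u \<in> carrier R" using u ideal.Icarr[OF mI] by simp
    have "y = r \<odot>\<^bsub>M\<^esub> (u \<odot>\<^bsub>M\<^esub> x \<oplus>\<^bsub>M\<^esub> (c \<otimes> b) \<odot>\<^bsub>M\<^esub> x)" unfolding y_def using c(2) by simp
    also have "\<dots> = r \<odot>\<^bsub>M\<^esub> (u \<odot>\<^bsub>M\<^esub> x) \<oplus>\<^bsub>M\<^esub> r \<odot>\<^bsub>M\<^esub> ((c \<otimes> b) \<odot>\<^bsub>M\<^esub> x)"
      using rR uR c(1) b(1) xM by (simp add: smult_r_distr)
    also have "r \<odot>\<^bsub>M\<^esub> (u \<odot>\<^bsub>M\<^esub> x) = u \<odot>\<^bsub>M\<^esub> y" unfolding y_def using rR uR xM by (rule smult_comm)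
    also have "u \<odot>\<^bsub>M\<^esub> y = \<zero>\<^bsub>M\<^esub>" using u by (rule my)
    also have "r \<odot>\<^bsub>M\<^esub> ((c \<otimes> b) \<odot>\<^bsub>M\<^esub> x) = (c \<otimes> b) \<odot>\<^bsub>M\<^esub> y" unfolding y_def using rR c(1) b(1) xM by (simp add: smult_comm)
    also have "\<dots> = c \<odot>\<^bsub>M\<^esub> z" using c(1) b yM by (simp add: smult_assoc1)
    finally have yz: "y = c \<odot>\<^bsub>M\<^esub> z" using c(1) z(1) L'(1) submoduleE(1)[OF L'(1)] yM by (simp add: subset_iff)
    have yL': "y \<in> L'" unfolding yz using submoduleE(4)[OF L'(1) c(1) z(1)] .
    show "L' = S"
    proof (rule equalityI[OF L'(2)])
      show "S \<subseteq> L'"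
      proof
        fix w assume "w \<in> S"
        then obtain d where "d \<in> carrier R" "w = d \<odot>\<^bsub>M\<^esub> y" unfolding S_def by (rule memgenE)
        then show "w \<in> L'" using submoduleE(4)[OF L'(1)] yL' by simp
      qed
    qed
  qed
  then show ?thesis using SL by (intro exI conjI)
qed

lemma sum_left: "submodule N R M \<Longrightarrow> submodule K R M \<Longrightarrow> N \<subseteq> sum_sub M N K"
proof
  fix n assume N: "submodule N R M" and K: "submodule K R M" and n: "n \<in> N"
  have "n \<in> carrier M" using n submoduleE(1)[OF N] by (simp add: subset_iff)
  then have "n = n \<oplus>\<^bsub>M\<^esub> \<zero>\<^bsub>M\<^esub>" by simp
  then show "n \<in> sum_sub M N K" using n sub_zero[OF K] by (intro memsumI)
qed

lemma sum_right: "submodule N R M \<Longrightarrow> submodule K R M \<Longrightarrow> K \<subseteq> sum_sub M N K"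
proof
  fix k assume N: "submodule N R M" and K: "submodule K R M" and k: "k \<in> K"
  have "k \<in> carrier M" using k submoduleE(1)[OF K] by (simp add: subset_iff)
  then have "k = \<zero>\<^bsub>M\<^esub> \<oplus>\<^bsub>M\<^esub> k" by simp
  then show "k \<in> sum_sub M N K" using k sub_zero[OF N] by (intro memsumI)
qed

lemma large_min: "large_submodule R M X \<Longrightarrow> minimal_submodule R M S \<Longrightarrow> S \<subseteq> X"
proof -
  assume X: "large_submodule R M X" and S: "minimal_submodule R M S"
  have "\<forall>L. submodule L R M \<and> L \<noteq> {\<zero>\<^bsub>M\<^esub>} \<longrightarrow> X \<inter> L \<noteq> {\<zero>\<^bsub>M\<^esub>}" "submodule X R M"
    using X unfolding large_submodule_def by simp_all
  moreover have "submodule S R M" "S \<noteq> {\<zero>\<^bsub>M\<^esub>}" using S unfolding minimal_submodule_def by simp_all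
  ultimately have "X \<inter> S \<noteq> {\<zero>\<^bsub>M\<^esub>}" by simp
  then have "S \<inter> X \<noteq> {\<zero>\<^bsub>M\<^esub>}" by (simp add: Int_commute)
  then show "S \<subseteq> X" using min_int[OF S \<open>submodule X R M\<close>] by simp
qed

lemma sub_zero_set: "S \<subseteq> {z} \<Longrightarrow> z \<in> S \<Longrightarrow> S = {z}"
  by (rule equalityI) simp_all

lemma min_large:
  assumes C: "comultiplication_module R M" and X: "submodule X R M"
    and all: "\<And>S. minimal_submodule R M S \<Longrightarrow> S \<subseteq> X"
  shows "large_submodule R M X"
  unfolding large_submodule_def
proof (intro conjI allI impI X)
  fix L assume "submodule L R M \<and> L \<noteq> {\<zero>\<^bsub>M\<^esub>}"
  then have L: "submodule L R M" "L \<noteq> {\<zero>\<^bsub>M\<^esub>}" by simp_all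
  obtain S where S: "minimal_submodule R M S" "S \<subseteq> L" using min_ess[OF C L] by (elim exE conjE)
  have SX: "S \<subseteq> X \<inter> L" using all[OF S(1)] S(2) by simp
  show "X \<inter> L \<noteq> {\<zero>\<^bsub>M\<^esub>}"
  proof
    assume "X \<inter> L = {\<zero>\<^bsub>M\<^esub>}"
    then have "S = {\<zero>\<^bsub>M\<^esub>}" using SX sub_zero[OF min_sub[OF S(1)]] by (simp add: sub_zero_set)
    then show False using S(1) unfolding minimal_submodule_def by simp
  qed
qed

lemma vertex_min:
  assumes C: "comultiplication_module R M" and N: "N \<in> lsg_vertices R M"
  shows "\<exists>S. minimal_submodule R M S \<and> \<not> S \<subseteq> N"
proof (rule ccontr)
  assume "\<not> ?thesis"
  then have all: "\<And>S. minimal_submodule R M S \<Longrightarrow> S \<subseteq> N" by simp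
  have "submodule N R M" "\<not> large_submodule R M N" using N unfolding lsg_vertices_def by simp_all
  then show False using min_large[OF C _ all] by simp
qed
end

lemma enat_Sup_eq: "n \<in> A \<Longrightarrow> (\<And>x. x \<in> A \<Longrightarrow> x \<le> n) \<Longrightarrow> Sup A = (n::enat)"
  by (metis Sup_upper Sup_least antisym)

theorem theorem3p4:
  fixes R :: "('a, 'c) ring_scheme" and M :: "('a, 'b, 'd) module_scheme"
  assumes "Module.module R M"
    and "carrier M \<noteq> {\<zero>\<^bsub>M\<^esub>}"
    and "comultiplication_module R M"
    and "lsg_non_null R M"
    and "finite (Min_sub R M)"
  shows "lsg_independence_number R M = enat (card (Min_sub R M))"
proof -
  interpret Module.module R M by (rule assms(1))
  note C = assms(3)
  define \<S> where "\<S> = Min_sub R M"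
  have finS: "finite \<S>" using assms(5) unfolding \<S>_def .
  have inS: "S \<in> \<S> \<longleftrightarrow> minimal_submodule R M S" for S unfolding \<S>_def Min_sub_def by simp
  define g where "g = (\<lambda>S::'b set set. if finite S then enat (card S) else \<infinity>)"
  have upper: "g T \<le> enat (card \<S>)" if T: "lsg_independent R M T" for T
  proof -
    have Tv: "T \<subseteq> lsg_vertices R M" and Tna: "\<And>N K. N \<in> T \<Longrightarrow> K \<in> T \<Longrightarrow> \<not> lsg_adj R M N K"
      using T unfolding lsg_independent_def by simp_all
    define f where "f = (\<lambda>N. SOME S. minimal_submodule R M S \<and> \<not> S \<subseteq> N)"
    have f: "minimal_submodule R M (f N) \<and> \<not> f N \<subseteq> N" if "N \<in> T" for N
    proof -
      have "N \<in> lsg_vertices R M" using that Tv by (simp add: subset_iff)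
      then have "\<exists>S. minimal_submodule R M S \<and> \<not> S \<subseteq> N" by (rule vertex_min[OF C])
      then show ?thesis unfolding f_def by (rule someI_ex)
    qed
    have inj: "inj_on f T"
    proof (rule inj_onI)
      fix N K assume N: "N \<in> T" and K: "K \<in> T" and eq: "f N = f K"
      show "N = K"
      proof (rule ccontr)
        assume ne: "N \<noteq> K"
        have Nv: "N \<in> lsg_vertices R M" and Kv: "K \<in> lsg_vertices R M" using N K Tv by (simp_all add: subset_iff)
        have "\<not> lsg_adj R M N K" using Tna[OF N K] .
        then have lg: "large_submodule R M (sum_sub M N K)" using Nv Kv ne unfolding lsg_adj_def by simp
        have Ns: "submodule N R M" and Ks: "submodule K R M" using Nv Kv unfolding lsg_vertices_def by simp_all
        have fN: "minimal_submodule R M (f N)" "\<not> f N \<subseteq> N" using f[OF N] by simp_all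
        have fK: "\<not> f N \<subseteq> K" using f[OF K] eq by simp
        have "f N \<subseteq> sum_sub M N K" using large_min[OF lg fN(1)] .
        then have "f N \<subseteq> N \<or> f N \<subseteq> K" by (rule min_prime[OF C fN(1) Ns Ks])
        then show False using fN(2) fK by simp
      qed
    qed
    have img: "f ` T \<subseteq> \<S>"
    proof
      fix S assume "S \<in> f ` T"
      then obtain N where "N \<in> T" "S = f N" by (rule imageE)
      then show "S \<in> \<S>" using f inS by simp
    qed
    have finT: "finite T" using finite_imageD[OF finite_subset[OF img finS] inj] .
    have "card T = card (f ` T)" using card_image[OF inj] by simp
    also have "\<dots> \<le> card \<S>" by (rule card_mono[OF finS img])
    finally show ?thesis unfolding g_def using finT by simp
  qed
  obtain N0 K0 where adj: "lsg_adj R M N0 K0" using assms(4) unfolding lsg_non_null_def by (elim exE)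
  have N0v: "N0 \<in> lsg_vertices R M" using adj unfolding lsg_adj_def by simp
  have N0s: "submodule N0 R M" "N0 \<noteq> {\<zero>\<^bsub>M\<^esub>}" using N0v unfolding lsg_vertices_def by simp_all
  obtain S1 where S1: "minimal_submodule R M S1" "\<not> S1 \<subseteq> N0" using vertex_min[OF C N0v] by (elim exE conjE)
  obtain S2 where S2: "minimal_submodule R M S2" "S2 \<subseteq> N0" using min_ess[OF C N0s] by (elim exE conjE)
  have S12: "S1 \<noteq> S2" using S1(2) S2(2) by metis
  have other: "\<exists>S'. minimal_submodule R M S' \<and> S' \<noteq> S" for S
  proof (cases "S = S1")
    case True then show ?thesis using S2(1) S12 by (intro exI[of _ S2]) simp
  next
    case False then show ?thesis using S1(1) by (intro exI[of _ S1]) simp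
  qed
  define s0 where "s0 = (\<lambda>S. SOME s. s \<in> S \<and> s \<noteq> \<zero>\<^bsub>M\<^esub>)"
  have s0: "s0 S \<in> S \<and> s0 S \<noteq> \<zero>\<^bsub>M\<^esub>" if Sm: "minimal_submodule R M S" for S
  proof -
    obtain s where "s \<in> S" "s \<noteq> \<zero>\<^bsub>M\<^esub>" by (rule min_nz[OF Sm])
    then have "\<exists>s. s \<in> S \<and> s \<noteq> \<zero>\<^bsub>M\<^esub>" by (intro exI conjI)
    then show ?thesis unfolding s0_def by (rule someI_ex)
  qed
  define rr where "rr = (\<lambda>S. SOME r. r \<in> carrier R \<and> (\<forall>S'\<in>\<S> - {S}. \<forall>x\<in>S'. r \<odot>\<^bsub>M\<^esub> x = \<zero>\<^bsub>M\<^esub>) \<and> r \<odot>\<^bsub>M\<^esub> s0 S \<noteq> \<zero>\<^bsub>M\<^esub>)"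
  have rr: "rr S \<in> carrier R \<and> (\<forall>S'\<in>\<S> - {S}. \<forall>x\<in>S'. rr S \<odot>\<^bsub>M\<^esub> x = \<zero>\<^bsub>M\<^esub>) \<and> rr S \<odot>\<^bsub>M\<^esub> s0 S \<noteq> \<zero>\<^bsub>M\<^esub>"
    if S: "minimal_submodule R M S" for S
  proof -
    have "finite (\<S> - {S})" using finS by simp
    moreover have "\<forall>S'\<in>\<S> - {S}. minimal_submodule R M S'" using inS by simp
    moreover have "S \<notin> \<S> - {S}" by simp
    ultimately have "\<exists>r\<in>carrier R. (\<forall>S'\<in>\<S> - {S}. \<forall>x\<in>S'. r \<odot>\<^bsub>M\<^esub> x = \<zero>\<^bsub>M\<^esub>) \<and> r \<odot>\<^bsub>M\<^esub> s0 S \<noteq> \<zero>\<^bsub>M\<^esub>"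
      using s0[OF S] by (intro min_prod[OF C S]) simp_all
    then have "\<exists>r. r \<in> carrier R \<and> (\<forall>S'\<in>\<S> - {S}. \<forall>x\<in>S'. r \<odot>\<^bsub>M\<^esub> x = \<zero>\<^bsub>M\<^esub>) \<and> r \<odot>\<^bsub>M\<^esub> s0 S \<noteq> \<zero>\<^bsub>M\<^esub>"
      by (simp add: Bex_def)
    then show ?thesis unfolding rr_def by (rule someI_ex)
  qed
  define V where "V = (\<lambda>S. {x \<in> carrier M. rr S \<odot>\<^bsub>M\<^esub> x = \<zero>\<^bsub>M\<^esub>})"
  have Vsub: "submodule (V S) R M" if "minimal_submodule R M S" for S
    unfolding V_def using rr[OF that] by (intro sub_ann) simp
  have Vcont: "S' \<subseteq> V S" if S: "minimal_submodule R M S" and S': "minimal_submodule R M S'" and ne: "S' \<noteq> S" for S S'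
  proof
    fix x assume x: "x \<in> S'"
    have "S' \<in> \<S> - {S}" using S' ne inS by simp
    then have "rr S \<odot>\<^bsub>M\<^esub> x = \<zero>\<^bsub>M\<^esub>" using rr[OF S] x by simp
    moreover have "x \<in> carrier M" using x min_carr[OF S'] by (simp add: subset_iff)
    ultimately show "x \<in> V S" unfolding V_def by simp
  qed
  have Vnot: "\<not> S \<subseteq> V S" if S: "minimal_submodule R M S" for S
  proof
    assume "S \<subseteq> V S"
    then have "s0 S \<in> V S" using s0[OF S] by (simp add: subset_iff)
    then show False using rr[OF S] unfolding V_def by simp
  qed
  have Vvert: "V S \<in> lsg_vertices R M" if S: "minimal_submodule R M S" for S
  proof -
    obtain S' where S': "minimal_submodule R M S'" "S' \<noteq> S" using other[of S] by (elim exE conjE)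
    have "S' \<subseteq> V S" by (rule Vcont[OF S S'])
    moreover obtain s where "s \<in> S'" "s \<noteq> \<zero>\<^bsub>M\<^esub>" by (rule min_nz[OF S'(1)])
    ultimately have "V S \<noteq> {\<zero>\<^bsub>M\<^esub>}" by (metis ne_single subsetD)
    moreover have "\<not> large_submodule R M (V S)" using large_min[OF _ S] Vnot[OF S] by metis
    ultimately show ?thesis unfolding lsg_vertices_def using Vsub[OF S] by simp
  qed
  have Vinj: "inj_on V \<S>"
  proof (rule inj_onI)
    fix S S' assume "S \<in> \<S>" "S' \<in> \<S>" and eq: "V S = V S'"
    then have S: "minimal_submodule R M S" and S': "minimal_submodule R M S'" using inS by simp_all
    show "S = S'"
    proof (rule ccontr)
      assume "S \<noteq> S'"
      then have "S \<subseteq> V S'" by (rule Vcont[OF S' S])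
      then show False using Vnot[OF S] eq by simp
    qed
  qed
  define T where "T = V ` \<S>"
  have Tind: "lsg_independent R M T"
    unfolding lsg_independent_def
  proof (intro conjI ballI)
    show "T \<subseteq> lsg_vertices R M"
    proof
      fix X assume "X \<in> T"
      then obtain S where "S \<in> \<S>" "X = V S" unfolding T_def by (rule imageE)
      then show "X \<in> lsg_vertices R M" using Vvert inS by simp
    qed
    fix X Y assume "X \<in> T" "Y \<in> T"
    then obtain S S' where SS: "S \<in> \<S>" "X = V S" "S' \<in> \<S>" "Y = V S'" unfolding T_def by (elim imageE)
    then have S: "minimal_submodule R M S" and S': "minimal_submodule R M S'" using inS by simp_all
    show "\<not> lsg_adj R M X Y"
    proof (cases "S = S'")
      case True then show ?thesis using SS unfolding lsg_adj_def by simp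
    next
      case False
      have sub: "submodule (sum_sub M (V S) (V S')) R M" by (rule sub_sum[OF Vsub[OF S] Vsub[OF S']])
      have "large_submodule R M (sum_sub M (V S) (V S'))"
      proof (rule min_large[OF C sub])
        fix S'' assume S'': "minimal_submodule R M S''"
        show "S'' \<subseteq> sum_sub M (V S) (V S')"
        proof (cases "S'' = S")
          case True
          then have "S'' \<subseteq> V S'" using Vcont[OF S' S] False by simp
          then show ?thesis using sum_right[OF Vsub[OF S] Vsub[OF S']] by (rule subset_trans)
        next
          case F2: False
          then have "S'' \<subseteq> V S" using Vcont[OF S S''] by simp
          then show ?thesis using sum_left[OF Vsub[OF S] Vsub[OF S']] by (rule subset_trans)
        qed
      qed
      then show ?thesis using SS unfolding lsg_adj_def by simp
    qed
  qed
  have cardT: "g T = enat (card \<S>)"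
    unfolding g_def T_def using finS card_image[OF Vinj] by simp
  have "Sup (g ` {S. lsg_independent R M S}) = enat (card \<S>)"
  proof (rule enat_Sup_eq)
    show "enat (card \<S>) \<in> g ` {S. lsg_independent R M S}"
      using Tind cardT by (metis image_eqI mem_Collect_eq)
    fix x assume "x \<in> g ` {S. lsg_independent R M S}"
    then obtain T' where "lsg_independent R M T'" "x = g T'" by auto
    then show "x \<le> enat (card \<S>)" using upper by simp
  qed
  then show ?thesis unfolding lsg_independence_number_def g_def \<S>_def .
qed
end
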